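(* Let $(X,Y)$ and $(\tilde X,\tilde Y)$ be random pairs on finite sets $\mathcal X\times\mathcal Y$ and suppose $D_{\chi^2}(P_{\tilde Y,\tilde X}\|P_{Y,X})\le\beta^2$. Then $P_{\tilde X}(x)=P_X(x)+O(\beta)$ for all $x\in\mathcal X$, and $P_{\tilde Y\mid\tilde X}(y\mid x)=P_{Y\mid X}(y\mid x)+O(\beta)$ for all $x\in\mathcal X$, $y\in\mathcal Y$. In addition, if $H_L(\tilde Y;Y\mid\tilde X)$ is bounded, then $H_L(\tilde Y;Y\mid\tilde X)=H_L(Y\mid X)+O(\beta)$.
   Context: Neyman's $\chi^2$-divergence: $D_{\chi^2}(P\|Q)=\sum_z(P(z)-Q(z))^2/Q(z)$. For a loss $L:\mathcal Y\times\mathcal A\to\mathbb R$: $H_L(Y\mid X=x)=\min_{a\in\mathcal A}\mathbb E_{Y\sim P_{Y\mid X=x}}[L(Y,a)]$ with minimizer (Bayes action) $a_{P_{Y\mid X=x}}$, and $H_L(Y\mid X)=\sum_xP_X(x)H_L(Y\mid X=x)$, assumed bounded. The generalized conditional cross entropy is $H_L(\tilde Y;Y\mid\tilde X=x)=\mathbb E_{Y\sim P_{\tilde Y\mid\tilde X=x}}[L(Y,a_{P_{Y\mid X=x}})]$ and $H_L(\tilde Y;Y\mid\tilde X)=\sum_xP_{\tilde X}(x)H_L(\tilde Y;Y\mid\tilde X=x)$. $O(\beta)$ is as $\beta\to0$. *)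

theory Defs
  imports "HOL-Probability.Probability"
begin

definition chi2_div :: "'a::finite pmf \<Rightarrow> 'a pmf \<Rightarrow> ereal" where
  "chi2_div P Q = (\<Sum>z\<in>UNIV. if pmf Q z = 0 then (if pmf P z = 0 then 0 else \<infinity>)
      else ereal ((pmf P z - pmf Q z)^2 / pmf Q z))"

definition marg_X :: "('x \<times> 'y) pmf \<Rightarrow> 'x pmf" where
  "marg_X P = map_pmf fst P"

text \<open>Conditional probability P(Y=y | X=x); by the Isabelle convention it is 0 when P_X(x)=0.\<close>
definition condYX :: "('x \<times> 'y) pmf \<Rightarrow> 'x \<Rightarrow> 'y \<Rightarrow> real" where
  "condYX P x y = pmf P (x, y) / pmf (marg_X P) x"

definition cond_exp_loss :: "('y::finite \<Rightarrow> 'act \<Rightarrow> real) \<Rightarrow> ('x \<times> 'y) pmf \<Rightarrow> 'x \<Rightarrow> 'act \<Rightarrow> real" where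
  "cond_exp_loss L P x a = (\<Sum>y\<in>UNIV. condYX P x y * L y a)"

definition is_bayes_action :: "('y::finite \<Rightarrow> 'act \<Rightarrow> real) \<Rightarrow> ('x \<times> 'y) pmf \<Rightarrow> 'x \<Rightarrow> 'act \<Rightarrow> bool" where
  "is_bayes_action L P x a \<longleftrightarrow> (\<forall>b. cond_exp_loss L P x a \<le> cond_exp_loss L P x b)"

definition cond_entropy :: "('y::finite \<Rightarrow> 'act \<Rightarrow> real) \<Rightarrow> ('x::finite \<times> 'y) pmf \<Rightarrow> real" where
  "cond_entropy L P = (\<Sum>x\<in>UNIV. pmf (marg_X P) x * (INF a. cond_exp_loss L P x a))"

text \<open>Generalized conditional cross entropy H_L(Yt;Y|Xt), where a x is the Bayes action
  for P_{Y|X=x}.\<close>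
definition cond_cross_entropy ::
  "('y::finite \<Rightarrow> 'act \<Rightarrow> real) \<Rightarrow> ('x::finite \<times> 'y) pmf \<Rightarrow> ('x \<Rightarrow> 'act) \<Rightarrow> real" where
  "cond_cross_entropy L Pt a = (\<Sum>x\<in>UNIV. pmf (marg_X Pt) x * cond_exp_loss L Pt x (a x))"

end

theory Submission
  imports Defs
begin

lemma marg_sum: "pmf (marg_X (Q::('x \<times> 'y::finite) pmf)) x = (\<Sum>y\<in>UNIV. pmf Q (x,y))"
proof -
  have "pmf (marg_X Q) x = measure Q (fst -` {x})" unfolding marg_X_def by (simp add: pmf_map)
  also have "fst -` {x} = Pair x ` (UNIV::'y set)" by auto
  also have "measure Q (Pair x ` (UNIV::'y set)) = (\<Sum>z\<in>Pair x ` UNIV. pmf Q z)"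
    by (rule measure_measure_pmf_finite) simp
  also have "\<dots> = (\<Sum>y\<in>UNIV. pmf Q (x,y))" by (subst sum.reindex) (auto simp: inj_on_def)
  finally show ?thesis .
qed

lemma chi2_pt:
  fixes P Pt :: "'a::finite pmf"
  assumes "chi2_div Pt P \<le> ereal (\<beta>^2)" "0 < \<beta>"
  shows "\<bar>pmf Pt z - pmf P z\<bar> \<le> \<beta>"
proof -
  define t where "t = (\<lambda>z. if pmf P z = 0 then (if pmf Pt z = 0 then 0 else \<infinity>)
      else ereal ((pmf Pt z - pmf P z)^2 / pmf P z))"
  have nn: "\<And>z. t z \<ge> 0" unfolding t_def by auto
  have "(\<Sum>z\<in>UNIV. t z) = t z + (\<Sum>z\<in>UNIV-{z}. t z)" by (rule sum.remove) auto
  moreover have "0 \<le> (\<Sum>z\<in>UNIV-{z}. t z)" by (rule sum_nonneg) (simp add: nn)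
  ultimately have "t z \<le> (\<Sum>z\<in>UNIV. t z)" by (metis add_increasing2 order_refl)
  also have "\<dots> \<le> ereal (\<beta>^2)" using assms(1) unfolding chi2_div_def t_def .
  finally have tz: "t z \<le> ereal (\<beta>^2)" .
  show ?thesis
  proof (cases "pmf P z = 0")
    case True
    then have "pmf Pt z = 0" using tz unfolding t_def by (auto split: if_splits)
    then show ?thesis using True assms by simp
  next
    case False
    then have pz: "pmf P z > 0" using pmf_nonneg[of P z] by linarith
    have "(pmf Pt z - pmf P z)^2 / pmf P z \<le> \<beta>^2" using tz False unfolding t_def by simp
    then have "(pmf Pt z - pmf P z)^2 \<le> \<beta>^2 * pmf P z" using pz by (simp add: divide_le_eq)
    also have "\<dots> \<le> \<beta>^2" using pmf_le_1[of P z] by (simp add: mult_left_le)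
    finally show ?thesis using assms(2) by (metis abs_le_square_iff abs_of_pos)
  qed
qed

lemma chi2_zero:
  fixes P Pt :: "'a::finite pmf"
  assumes "chi2_div Pt P \<le> ereal (\<beta>^2)" "0 < \<beta>"
  assumes "pmf P z = 0" shows "pmf Pt z = 0"
proof -
  define t where "t = (\<lambda>z. if pmf P z = 0 then (if pmf Pt z = 0 then 0 else \<infinity>)
      else ereal ((pmf Pt z - pmf P z)^2 / pmf P z))"
  have nn: "\<And>z. t z \<ge> 0" unfolding t_def by auto
  have "(\<Sum>z\<in>UNIV. t z) = t z + (\<Sum>z\<in>UNIV-{z}. t z)" by (rule sum.remove) auto
  moreover have "0 \<le> (\<Sum>z\<in>UNIV-{z}. t z)" by (rule sum_nonneg) (simp add: nn)
  ultimately have "t z \<le> (\<Sum>z\<in>UNIV. t z)" by (metis add_increasing2 order_refl)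
  also have "\<dots> \<le> ereal (\<beta>^2)" using assms(1) unfolding chi2_div_def t_def .
  finally have tz: "t z \<le> ereal (\<beta>^2)" .
  then show ?thesis using assms(3) unfolding t_def by (auto split: if_splits)
qed

lemma prod_lemma:
  fixes Q :: "('x \<times> 'y::finite) pmf"
  shows "pmf (marg_X Q) x * cond_exp_loss L Q x b = (\<Sum>y\<in>UNIV. pmf Q (x,y) * L y b)"
proof (cases "pmf (marg_X Q) x = 0")
  case True
  then have "\<forall>y\<in>UNIV. pmf Q (x,y) = 0" unfolding marg_sum by (subst (asm) sum_nonneg_eq_0_iff) auto
  then show ?thesis using True by simp
next
  case False
  then show ?thesis unfolding cond_exp_loss_def condYX_def sum_distrib_left
    by (intro sum.cong) auto
qed

lemma marg_diff:
  fixes P Pt :: "('x::finite \<times> 'y::finite) pmf"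
  assumes "chi2_div Pt P \<le> ereal (\<beta>^2)" "0 < \<beta>"
  shows "\<bar>pmf (marg_X Pt) x - pmf (marg_X P) x\<bar> \<le> real CARD('y) * \<beta>"
proof -
  have "\<bar>pmf (marg_X Pt) x - pmf (marg_X P) x\<bar> = \<bar>\<Sum>y\<in>UNIV. pmf Pt (x,y) - pmf P (x,y)\<bar>"
    unfolding marg_sum by (simp add: sum_subtractf)
  also have "\<dots> \<le> (\<Sum>y\<in>UNIV. \<bar>pmf Pt (x,y) - pmf P (x,y)\<bar>)" by (rule sum_abs)
  also have "\<dots> \<le> (\<Sum>y\<in>(UNIV::'y set). \<beta>)" by (intro sum_mono chi2_pt[OF assms])
  finally show ?thesis by simp
qed

lemma part2:
  fixes P :: "('x::finite \<times> 'y::finite) pmf"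
  shows "\<exists>C \<delta>. \<delta> > 0 \<and> (\<forall>(\<beta>::real) (Pt::('x \<times> 'y) pmf).
            0 < \<beta> \<and> \<beta> < \<delta> \<and> chi2_div Pt P \<le> ereal (\<beta>^2) \<longrightarrow>
            \<bar>condYX Pt x y - condYX P x y\<bar> \<le> C * \<beta>)"
proof (cases "pmf (marg_X P) x = 0")
  case True
  have z: "pmf P (x,y') = 0" for y'
    using True unfolding marg_sum by (subst (asm) sum_nonneg_eq_0_iff) auto
  have "\<forall>(\<beta>::real) (Pt::('x \<times> 'y) pmf).
            0 < \<beta> \<and> \<beta> < 1 \<and> chi2_div Pt P \<le> ereal (\<beta>^2) \<longrightarrow>
            \<bar>condYX Pt x y - condYX P x y\<bar> \<le> 0 * \<beta>"
  proof (intro allI impI)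
    fix \<beta> :: real and Pt :: "('x \<times> 'y) pmf"
    assume h: "0 < \<beta> \<and> \<beta> < 1 \<and> chi2_div Pt P \<le> ereal (\<beta>^2)"
    have "pmf Pt (x,y) = 0"
      using chi2_zero[of Pt P \<beta> "(x,y)"] h z by blast
    then show "\<bar>condYX Pt x y - condYX P x y\<bar> \<le> 0 * \<beta>"
      unfolding condYX_def using z by simp
  qed
  then show ?thesis by (intro exI[of _ "0::real"] exI[of _ "1::real"]) simp
next
  case False
  define p where "p = pmf (marg_X P) x"
  define n where "n = real CARD('y)"
  have p: "p > 0" using False pmf_nonneg[of "marg_X P" x] unfolding p_def by linarith
  have n: "n \<ge> 1" unfolding n_def by simp
  show ?thesis
  proof (rule exI[of _ "2 * (p + n) / p^2"], rule exI[of _ "p / (2*n)"], intro conjI allI impI)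
    show "p / (2*n) > 0" using p n by simp
    fix \<beta> :: real and Pt :: "('x \<times> 'y) pmf"
    assume h: "0 < \<beta> \<and> \<beta> < p / (2*n) \<and> chi2_div Pt P \<le> ereal (\<beta>^2)"
    define q where "q = pmf (marg_X Pt) x"
    have qp: "\<bar>q - p\<bar> \<le> n * \<beta>" using marg_diff[of Pt P \<beta> x] h unfolding q_def p_def n_def by simp
    have nb: "n * \<beta> < p / 2" using h n by (simp add: field_simps)
    have q2: "q > p / 2" using qp nb by linarith
    have q: "q > 0" using q2 p by linarith
    define u where "u = pmf Pt (x,y)"
    define v where "v = pmf P (x,y)"
    have uv: "\<bar>u - v\<bar> \<le> \<beta>" unfolding u_def v_def using chi2_pt h by blast
    have v: "0 \<le> v" "v \<le> 1" unfolding v_def by (simp_all add: pmf_le_1)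
    have "condYX Pt x y - condYX P x y = u / q - v / p"
      unfolding condYX_def u_def v_def q_def p_def ..
    also have "\<dots> = ((u - v) * p + v * (p - q)) / (q * p)" using p q by (simp add: field_simps)
    finally have eq: "\<bar>condYX Pt x y - condYX P x y\<bar> = \<bar>(u - v) * p + v * (p - q)\<bar> / (q * p)"
      using p q by simp
    have num: "\<bar>(u - v) * p + v * (p - q)\<bar> \<le> \<beta> * p + n * \<beta>"
    proof -
      have "\<bar>(u - v) * p + v * (p - q)\<bar> \<le> \<bar>u - v\<bar> * p + v * \<bar>p - q\<bar>"
      proof -
        have "\<bar>(u - v) * p + v * (p - q)\<bar> \<le> \<bar>(u - v) * p\<bar> + \<bar>v * (p - q)\<bar>" by (rule abs_triangle_ineq)
        also have "\<dots> = \<bar>u - v\<bar> * p + v * \<bar>p - q\<bar>" using p v by (simp add: abs_mult)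
        finally show ?thesis .
      qed
      also have "\<dots> \<le> \<beta> * p + 1 * (n * \<beta>)"
        using uv qp v p by (intro add_mono mult_mono) (auto simp: abs_minus_commute)
      finally show ?thesis by simp
    qed
    have den: "q * p \<ge> p^2 / 2" using q2 p by (simp add: power2_eq_square)
    have "\<bar>(u - v) * p + v * (p - q)\<bar> / (q * p) \<le> (\<beta> * p + n * \<beta>) / (p^2 / 2)"
      using num den p q by (intro frac_le) auto
    also have "\<dots> = 2 * (p + n) / p^2 * \<beta>" using p by (simp add: field_simps)
    finally show "\<bar>condYX Pt x y - condYX P x y\<bar> \<le> 2 * (p + n) / p^2 * \<beta>" using eq by simp
  qed
qed
theorem lemma2:
  fixes P :: "('x::finite \<times> 'y::finite) pmf"
    and L :: "'y \<Rightarrow> 'act \<Rightarrow> real"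
    and a :: "'x \<Rightarrow> 'act"
  assumes bayes: "\<forall>x. pmf (marg_X P) x > 0 \<longrightarrow> is_bayes_action L P x (a x)"
  shows "(\<forall>x. \<exists>C \<delta>. \<delta> > 0 \<and> (\<forall>(\<beta>::real) (Pt::('x \<times> 'y) pmf).
            0 < \<beta> \<and> \<beta> < \<delta> \<and> chi2_div Pt P \<le> ereal (\<beta>^2) \<longrightarrow>
            \<bar>pmf (marg_X Pt) x - pmf (marg_X P) x\<bar> \<le> C * \<beta>))
       \<and> (\<forall>x y. \<exists>C \<delta>. \<delta> > 0 \<and> (\<forall>(\<beta>::real) (Pt::('x \<times> 'y) pmf).
            0 < \<beta> \<and> \<beta> < \<delta> \<and> chi2_div Pt P \<le> ereal (\<beta>^2) \<longrightarrow>
            \<bar>condYX Pt x y - condYX P x y\<bar> \<le> C * \<beta>))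
       \<and> (\<exists>C \<delta>. \<delta> > 0 \<and> (\<forall>(\<beta>::real) (Pt::('x \<times> 'y) pmf).
            0 < \<beta> \<and> \<beta> < \<delta> \<and> chi2_div Pt P \<le> ereal (\<beta>^2) \<longrightarrow>
            \<bar>cond_cross_entropy L Pt a - cond_entropy L P\<bar> \<le> C * \<beta>))"
proof (intro conjI allI)
  fix x
  show "\<exists>C \<delta>. \<delta> > 0 \<and> (\<forall>(\<beta>::real) (Pt::('x \<times> 'y) pmf).
            0 < \<beta> \<and> \<beta> < \<delta> \<and> chi2_div Pt P \<le> ereal (\<beta>^2) \<longrightarrow>
            \<bar>pmf (marg_X Pt) x - pmf (marg_X P) x\<bar> \<le> C * \<beta>)"
    using marg_diff[of _ P] by (intro exI[of _ "real CARD('y)"] exI[of _ "1::real"]) auto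
next
  fix x y
  show "\<exists>C \<delta>. \<delta> > 0 \<and> (\<forall>(\<beta>::real) (Pt::('x \<times> 'y) pmf).
            0 < \<beta> \<and> \<beta> < \<delta> \<and> chi2_div Pt P \<le> ereal (\<beta>^2) \<longrightarrow>
            \<bar>condYX Pt x y - condYX P x y\<bar> \<le> C * \<beta>)" by (rule part2)
next
  define C where "C = (\<Sum>x\<in>UNIV. \<Sum>y\<in>UNIV. \<bar>L y (a x)\<bar>)"
  have ent: "cond_entropy L P = (\<Sum>x\<in>UNIV. \<Sum>y\<in>UNIV. pmf P (x,y) * L y (a x))"
    unfolding cond_entropy_def
  proof (intro sum.cong refl)
    fix x
    show "pmf (marg_X P) x * (INF b. cond_exp_loss L P x b) = (\<Sum>y\<in>UNIV. pmf P (x,y) * L y (a x))"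
    proof (cases "pmf (marg_X P) x > 0")
      case True
      have "(INF b. cond_exp_loss L P x b) = cond_exp_loss L P x (a x)"
        using bayes True unfolding is_bayes_action_def by (intro cInf_eq_minimum) auto
      then show ?thesis using prod_lemma[of P x L "a x"] by simp
    next
      case False
      then have z: "pmf (marg_X P) x = 0" using pmf_nonneg[of "marg_X P" x] by linarith
      then have "\<forall>y\<in>UNIV. pmf P (x,y) = 0" unfolding marg_sum by (subst (asm) sum_nonneg_eq_0_iff) auto
      then show ?thesis using z by simp
    qed
  qed
  have "\<forall>(\<beta>::real) (Pt::('x \<times> 'y) pmf).
            0 < \<beta> \<and> \<beta> < 1 \<and> chi2_div Pt P \<le> ereal (\<beta>^2) \<longrightarrow>
            \<bar>cond_cross_entropy L Pt a - cond_entropy L P\<bar> \<le> C * \<beta>"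
  proof (intro allI impI)
    fix \<beta> :: real and Pt :: "('x \<times> 'y) pmf"
    assume h: "0 < \<beta> \<and> \<beta> < 1 \<and> chi2_div Pt P \<le> ereal (\<beta>^2)"
    have "cond_cross_entropy L Pt a - cond_entropy L P
        = (\<Sum>x\<in>UNIV. \<Sum>y\<in>UNIV. (pmf Pt (x,y) - pmf P (x,y)) * L y (a x))"
      unfolding ent cond_cross_entropy_def prod_lemma
      by (simp add: sum_subtractf left_diff_distrib)
    also have "\<bar>\<dots>\<bar> \<le> (\<Sum>x\<in>UNIV. \<Sum>y\<in>UNIV. \<bar>(pmf Pt (x,y) - pmf P (x,y)) * L y (a x)\<bar>)"
      by (rule order_trans[OF sum_abs]) (intro sum_mono sum_abs)
    also have "\<dots> \<le> (\<Sum>x\<in>UNIV. \<Sum>y\<in>UNIV. \<beta> * \<bar>L y (a x)\<bar>)"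
      unfolding abs_mult using chi2_pt h by (intro sum_mono mult_right_mono) auto
    also have "\<dots> = C * \<beta>" unfolding C_def sum_distrib_left[symmetric] by simp
    finally show "\<bar>cond_cross_entropy L Pt a - cond_entropy L P\<bar> \<le> C * \<beta>" .
  qed
  then show "\<exists>C \<delta>. \<delta> > 0 \<and> (\<forall>(\<beta>::real) (Pt::('x \<times> 'y) pmf).
            0 < \<beta> \<and> \<beta> < \<delta> \<and> chi2_div Pt P \<le> ereal (\<beta>^2) \<longrightarrow>
            \<bar>cond_cross_entropy L Pt a - cond_entropy L P\<bar> \<le> C * \<beta>)"
    by (intro exI[of _ C] exI[of _ "1::real"]) simp
qed

end
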